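(* Let $\Omega=\{x\in\mathbb{R}^n: a_i^Tx\le b_i,\ i=1,\ldots,m\}$ be a polyhedral convex set with nonempty interior, and let $f:\mathbb{R}^n\to\mathbb{R}$ be continuously differentiable with $L$-Lipschitz continuous gradient ($L>0$) and bounded below on $\Omega$ by $f_{\mathrm{low}}$. Consider the direct-search algorithm described below and suppose that at every iteration $k$ the polling set $\mathcal{D}_k$ is a $\Lambda$-positive spanning set for $B(x_k,\alpha_k)\cap\Omega$ and satisfies $\|d\|\le d_{\max}\alpha_k$ for all $d\in\mathcal{D}_k$, where $\Lambda>0$, $d_{\max}>0$. If at iteration $k$ we have $\pi(x_k)\neq0$ and $\alpha_k<\min\left(\frac{2\pi(x_k)}{(Ld_{\max}^2+\sigma)\Lambda},1\right)$, then iteration $k$ is successful.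
   Context: $\|\cdot\|$ is the Euclidean norm, $B(y,r)=\{z:\|z-y\|\le r\}$. Criticality measure: for $x\in\Omega$, $\pi(x):=\left|\min_{v:\ x+v\in\Omega,\ \|v\|\le1}\nabla f(x)^Tv\right|$. Given $x\in\Omega$, $\alpha>0$, $\Lambda\ge0$, a set $\{d_1,\ldots,d_p\}\subset\mathbb{R}^n$ is a $\Lambda$-positive spanning set for $B(x,\alpha)\cap\Omega$ if $x+d_i\in\Omega$ for all $i$ and, for every $v\in\mathbb{R}^n$ with $x+v\in\Omega$ and $\|v\|\le\alpha$, there exists $c\in\mathbb{R}^p$ with $c\ge0$, $v=\sum_ic_id_i$ and $\|c\|_1\le\Lambda$. The algorithm: inputs $x_0\in\Omega$, $\alpha_{\max}>0$, $\alpha_0\in(0,\alpha_{\max}]$, $\sigma>0$, $0<\gamma_{\mathrm{dec}}<1<\gamma_{\mathrm{inc}}$. For $k=0,1,2,\ldots$: compute a finite polling set $\mathcal{D}_k\subset\mathbb{R}^n$; if there exists $d_k\in\mathcal{D}_k$ with $x_k+d_k\in\Omega$ and $f(x_k+d_k)<f(x_k)-\frac{\sigma}{2}\alpha_k^2$, set $x_{k+1}=x_k+d_k$, $\alpha_{k+1}=\min\{\gamma_{\mathrm{inc}}\alpha_k,\alpha_{\max}\}$ (successful iteration); otherwise set $x_{k+1}=x_k$, $\alpha_{k+1}=\gamma_{\mathrm{dec}}\alpha_k$ (unsuccessful iteration). *)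

theory Defs
  imports "HOL-Analysis.Analysis"
begin

text \<open>The set over which the minimum is taken is compact and nonempty when x in Omega,
  so the minimum equals the infimum.\<close>
definition crit_measure :: "('a::euclidean_space \<Rightarrow> 'a) \<Rightarrow> 'a set \<Rightarrow> 'a \<Rightarrow> real" where
  "crit_measure g \<Omega> x = \<bar>Inf {g x \<bullet> v | v. x + v \<in> \<Omega> \<and> norm v \<le> 1}\<bar>"

definition lambda_pss :: "real \<Rightarrow> 'a::euclidean_space set \<Rightarrow> 'a \<Rightarrow> real \<Rightarrow> 'a set \<Rightarrow> bool" where
  "lambda_pss \<Lambda> \<Omega> x \<alpha> D \<longleftrightarrow>
     finite D \<and> (\<forall>d\<in>D. x + d \<in> \<Omega>) \<and>
     (\<forall>v. x + v \<in> \<Omega> \<and> norm v \<le> \<alpha> \<longrightarrow>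
        (\<exists>c::'a \<Rightarrow> real. (\<forall>d\<in>D. c d \<ge> 0) \<and> v = (\<Sum>d\<in>D. c d *\<^sub>R d) \<and> (\<Sum>d\<in>D. c d) \<le> \<Lambda>))"

definition succ_cond :: "('a::real_normed_vector \<Rightarrow> real) \<Rightarrow> 'a set \<Rightarrow> real \<Rightarrow> 'a \<Rightarrow> real \<Rightarrow> 'a set \<Rightarrow> bool" where
  "succ_cond f \<Omega> \<sigma> x \<alpha> D \<longleftrightarrow> (\<exists>d\<in>D. x + d \<in> \<Omega> \<and> f (x + d) < f x - \<sigma> / 2 * \<alpha>\<^sup>2)"

definition ds_run :: "('a::real_normed_vector \<Rightarrow> real) \<Rightarrow> 'a set \<Rightarrow> real \<Rightarrow> real \<Rightarrow> real \<Rightarrow> real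
     \<Rightarrow> (nat \<Rightarrow> 'a) \<Rightarrow> (nat \<Rightarrow> real) \<Rightarrow> (nat \<Rightarrow> 'a set) \<Rightarrow> bool" where
  "ds_run f \<Omega> \<alpha>max \<sigma> \<gamma>dec \<gamma>inc x \<alpha> D \<longleftrightarrow>
     x 0 \<in> \<Omega> \<and> \<alpha>max > 0 \<and> 0 < \<alpha> 0 \<and> \<alpha> 0 \<le> \<alpha>max \<and> \<sigma> > 0 \<and>
     0 < \<gamma>dec \<and> \<gamma>dec < 1 \<and> 1 < \<gamma>inc \<and>
     (\<forall>k. finite (D k) \<and>
        (if succ_cond f \<Omega> \<sigma> (x k) (\<alpha> k) (D k)
         then (\<exists>d\<in>D k. x k + d \<in> \<Omega> \<and> f (x k + d) < f (x k) - \<sigma> / 2 * (\<alpha> k)\<^sup>2 \<and>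
                 x (Suc k) = x k + d) \<and> \<alpha> (Suc k) = min (\<gamma>inc * \<alpha> k) \<alpha>max
         else x (Suc k) = x k \<and> \<alpha> (Suc k) = \<gamma>dec * \<alpha> k))"

end

theory Submission
  imports Defs
begin
lemma taylor_ub:
  fixes f :: "'a::euclidean_space \<Rightarrow> real" and g :: "'a \<Rightarrow> 'a"
  assumes grad: "\<And>y. GDERIV f y :> g y"
    and Lip: "\<And>y z. norm (g y - g z) \<le> L * norm (y - z)"
  shows "f (y + d) \<le> f y + g y \<bullet> d + L / 2 * (norm d)\<^sup>2"
proof -
  define h where "h t = f (y + t *\<^sub>R d) - t * (g y \<bullet> d) - L / 2 * t\<^sup>2 * (norm d)\<^sup>2" for t
  have der: "(h has_real_derivative (g (y + t *\<^sub>R d) \<bullet> d - g y \<bullet> d - L * t * (norm d)\<^sup>2)) (at t)" for t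
  proof -
    have d1: "((\<lambda>t. y + t *\<^sub>R d) has_derivative (\<lambda>s. s *\<^sub>R d)) (at t)"
      by (auto intro!: derivative_eq_intros)
    have d2: "(f has_derivative (\<lambda>h. h \<bullet> g (y + t *\<^sub>R d))) (at (y + t *\<^sub>R d))"
      using grad[of "y + t *\<^sub>R d"] unfolding gderiv_def by simp
    have "((\<lambda>t. f (y + t *\<^sub>R d)) has_derivative (\<lambda>s. (s *\<^sub>R d) \<bullet> g (y + t *\<^sub>R d))) (at t)"
      using has_derivative_compose[OF d1 d2] by (simp add: o_def)
    then have "((\<lambda>t. f (y + t *\<^sub>R d)) has_real_derivative (g (y + t *\<^sub>R d) \<bullet> d)) (at t)"
      by (simp add: has_field_derivative_def inner_commute mult_commute_abs)
    then show ?thesis unfolding h_def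
      by (auto intro!: derivative_eq_intros simp: power2_eq_square algebra_simps)
  qed
  have "h 1 \<le> h 0"
  proof (rule DERIV_nonpos_imp_nonincreasing[of 0 1 h])
    fix t :: real assume t: "0 \<le> t" "t \<le> 1"
    have "g (y + t *\<^sub>R d) \<bullet> d - g y \<bullet> d = (g (y + t *\<^sub>R d) - g y) \<bullet> d" by (simp add: inner_diff_left)
    also have "\<dots> \<le> norm (g (y + t *\<^sub>R d) - g y) * norm d" by (rule norm_cauchy_schwarz)
    also have "\<dots> \<le> (L * norm (t *\<^sub>R d)) * norm d"
      using Lip[of "y + t *\<^sub>R d" y] by (intro mult_right_mono) auto
    also have "\<dots> = L * t * (norm d)\<^sup>2" using t by (simp add: power2_eq_square)
    finally have "g (y + t *\<^sub>R d) \<bullet> d - g y \<bullet> d - L * t * (norm d)\<^sup>2 \<le> 0" by simp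
    then show "\<exists>y. DERIV h t :> y \<and> y \<le> 0" using der[of t] by blast
  qed simp
  then show ?thesis unfolding h_def by simp
qed
theorem lemma4p6:
  fixes f :: "'a::euclidean_space \<Rightarrow> real" and g :: "'a \<Rightarrow> 'a"
    and A :: "nat \<Rightarrow> 'a" and b :: "nat \<Rightarrow> real" and m :: nat and \<Omega> :: "'a set"
    and x :: "nat \<Rightarrow> 'a" and \<alpha> :: "nat \<Rightarrow> real" and D :: "nat \<Rightarrow> 'a set"
    and L flow \<Lambda> dmax \<alpha>max \<sigma> \<gamma>dec \<gamma>inc :: real and k :: nat
  assumes Omega: "\<Omega> = {y. \<forall>i<m. A i \<bullet> y \<le> b i}"
    and interior: "interior \<Omega> \<noteq> {}"
    and grad: "\<And>y. GDERIV f y :> g y"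
    and grad_cont: "continuous_on UNIV g"
    and Lpos: "L > 0"
    and Lip: "\<And>y z. norm (g y - g z) \<le> L * norm (y - z)"
    and low: "\<And>y. y \<in> \<Omega> \<Longrightarrow> f y \<ge> flow"
    and run: "ds_run f \<Omega> \<alpha>max \<sigma> \<gamma>dec \<gamma>inc x \<alpha> D"
    and Lambda: "\<Lambda> > 0" and dmax: "dmax > 0"
    and poll: "\<And>j. lambda_pss \<Lambda> \<Omega> (x j) (\<alpha> j) (D j)"
    and bound: "\<And>j d. d \<in> D j \<Longrightarrow> norm d \<le> dmax * \<alpha> j"
    and crit: "crit_measure g \<Omega> (x k) \<noteq> 0"
    and small: "\<alpha> k < min (2 * crit_measure g \<Omega> (x k) / ((L * dmax\<^sup>2 + \<sigma>) * \<Lambda>)) 1"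
  shows "succ_cond f \<Omega> \<sigma> (x k) (\<alpha> k) (D k)"
proof -
  have inv: "x j \<in> \<Omega> \<and> \<alpha> j > 0" for j
  proof (induction j)
    case 0 then show ?case using run unfolding ds_run_def by auto
  next
    case (Suc j)
    have r: "finite (D j) \<and>
        (if succ_cond f \<Omega> \<sigma> (x j) (\<alpha> j) (D j)
         then (\<exists>d\<in>D j. x j + d \<in> \<Omega> \<and> f (x j + d) < f (x j) - \<sigma> / 2 * (\<alpha> j)\<^sup>2 \<and>
                 x (Suc j) = x j + d) \<and> \<alpha> (Suc j) = min (\<gamma>inc * \<alpha> j) \<alpha>max
         else x (Suc j) = x j \<and> \<alpha> (Suc j) = \<gamma>dec * \<alpha> j)"
      and p: "\<alpha>max > 0" "0 < \<gamma>dec" "1 < \<gamma>inc" using run unfolding ds_run_def by blast+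
    show ?case
    proof (cases "succ_cond f \<Omega> \<sigma> (x j) (\<alpha> j) (D j)")
      case True with r p Suc show ?thesis by auto
    next
      case False with r p Suc show ?thesis by auto
    qed
  qed
  define y where "y = x k"
  define a where "a = \<alpha> k"
  define gy where "gy = g y"
  define \<pi> where "\<pi> = crit_measure g \<Omega> y"
  have yO: "y \<in> \<Omega>" and apos: "a > 0" using inv[of k] by (auto simp: y_def a_def)
  have a1: "a < 1" and asmall: "a < 2 * \<pi> / ((L * dmax\<^sup>2 + \<sigma>) * \<Lambda>)"
    using small by (auto simp: a_def \<pi>_def y_def)
  have sigpos: "\<sigma> > 0" using run unfolding ds_run_def by auto
  have clO: "closed \<Omega>" unfolding Omega
    by (intro closed_Collect_all closed_Collect_imp closed_Collect_le continuous_intros) auto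
  define K where "K = {v. y + v \<in> \<Omega> \<and> norm v \<le> 1}"
  have KK: "K = ((\<lambda>v. y + v) -` \<Omega>) \<inter> cball 0 1" unfolding K_def by auto
  have compK: "compact K" unfolding KK
    by (subst Int_commute, rule compact_Int_closed[OF compact_cball],
        rule continuous_closed_vimage[OF clO], intro continuous_intros)
  have "0 \<in> K" using yO unfolding K_def by auto
  moreover have "continuous_on K (\<lambda>v. gy \<bullet> v)" by (intro continuous_intros)
  ultimately obtain v0 where v0: "v0 \<in> K" "\<And>v. v \<in> K \<Longrightarrow> gy \<bullet> v0 \<le> gy \<bullet> v"
    using continuous_attains_inf[OF compK, of "\<lambda>v. gy \<bullet> v"] by blast
  have "Inf {g y \<bullet> v | v. y + v \<in> \<Omega> \<and> norm v \<le> 1} = gy \<bullet> v0"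
    by (rule cInf_eq_minimum) (use v0 in \<open>auto simp: K_def gy_def\<close>)
  then have pi_eq: "\<pi> = \<bar>gy \<bullet> v0\<bar>" unfolding \<pi>_def crit_measure_def by simp
  have "gy \<bullet> v0 \<le> 0" using v0(2)[OF \<open>0 \<in> K\<close>] by simp
  then have pv0: "gy \<bullet> v0 = - \<pi>" using pi_eq by simp
  have pipos: "\<pi> > 0" using crit pi_eq unfolding \<pi>_def y_def by auto
  define w where "w = a *\<^sub>R v0"
  have wO: "y + w \<in> \<Omega>"
  proof -
    have yv: "y + v0 \<in> \<Omega>" using v0 K_def by auto
    show ?thesis unfolding Omega w_def
    proof (intro CollectI allI impI)
      fix i assume i: "i < m"
      have "A i \<bullet> y \<le> b i" "A i \<bullet> (y + v0) \<le> b i" using i yO yv Omega by auto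
      then have "(1 - a) * (A i \<bullet> y) + a * (A i \<bullet> (y + v0)) \<le> (1 - a) * b i + a * b i"
        using apos a1 by (intro add_mono mult_left_mono) auto
      then show "A i \<bullet> (y + a *\<^sub>R v0) \<le> b i" by (simp add: algebra_simps inner_add_right)
    qed
  qed
  have wn: "norm w \<le> a" using v0 apos unfolding w_def K_def by (auto intro: mult_left_le)
  obtain c where c: "\<And>d. d \<in> D k \<Longrightarrow> c d \<ge> 0" "w = (\<Sum>d\<in>D k. c d *\<^sub>R d)" "(\<Sum>d\<in>D k. c d) \<le> \<Lambda>"
    and finD: "finite (D k)" and DO: "\<And>d. d \<in> D k \<Longrightarrow> y + d \<in> \<Omega>"
    using poll[of k] wO wn unfolding lambda_pss_def y_def a_def by blast
  have gw: "gy \<bullet> w = - a * \<pi>" unfolding w_def using pv0 by simp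
  have gsum: "gy \<bullet> w = (\<Sum>d\<in>D k. c d * (gy \<bullet> d))" unfolding c(2)
    by (simp add: inner_sum_right)
  have Dne: "D k \<noteq> {}" using gw gsum apos pipos by auto
  define \<mu> where "\<mu> = Min ((\<lambda>d. gy \<bullet> d) ` D k)"
  have "\<mu> \<in> (\<lambda>d. gy \<bullet> d) ` D k"
    unfolding \<mu>_def using finD Dne by (intro Min_in) auto
  then obtain d where dD: "d \<in> D k" and dmu: "gy \<bullet> d = \<mu>" by auto
  have mule: "\<mu> \<le> gy \<bullet> d'" if "d' \<in> D k" for d' unfolding \<mu>_def using finD that by auto
  have "(\<Sum>d\<in>D k. c d * \<mu>) \<le> (\<Sum>d\<in>D k. c d * (gy \<bullet> d))"
    by (intro sum_mono mult_left_mono mule c(1))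
  then have s1: "\<mu> * (\<Sum>d\<in>D k. c d) \<le> - a * \<pi>" using gw gsum by (simp add: sum_distrib_left mult.commute[of \<mu>])
  have mneg: "\<mu> < 0"
  proof (rule ccontr)
    assume "\<not> \<mu> < 0"
    then have "0 \<le> \<mu> * (\<Sum>d\<in>D k. c d)" using c(1) by (intro mult_nonneg_nonneg sum_nonneg) auto
    then show False using s1 mult_pos_pos[OF apos pipos] by linarith
  qed
  have "\<mu> * \<Lambda> \<le> \<mu> * (\<Sum>d\<in>D k. c d)" using mneg c(3) by (intro mult_left_mono_neg) auto
  then have mub: "\<mu> * \<Lambda> \<le> - a * \<pi>" using s1 by linarith
  have "f (y + d) \<le> f y + gy \<bullet> d + L / 2 * (norm d)\<^sup>2"
    unfolding gy_def by (rule taylor_ub[OF grad Lip])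
  also have "(norm d)\<^sup>2 \<le> (dmax * a)\<^sup>2"
    using bound[OF dD] by (intro power_mono) (auto simp: a_def)
  then have "L / 2 * (norm d)\<^sup>2 \<le> L / 2 * (dmax * a)\<^sup>2" using Lpos by (intro mult_left_mono) auto
  finally have fb: "f (y + d) \<le> f y + \<mu> + L / 2 * (dmax * a)\<^sup>2" using dmu by linarith
  have mu_le: "\<mu> \<le> (- a * \<pi>) / \<Lambda>" using mub Lambda by (subst pos_le_divide_eq) auto
  have "a * ((L * dmax\<^sup>2 + \<sigma>) * \<Lambda>) < 2 * \<pi>"
  proof -
    have "0 < (L * dmax\<^sup>2 + \<sigma>) * \<Lambda>" using Lpos sigpos Lambda dmax by (intro mult_pos_pos add_pos_pos) auto
    then show ?thesis using asmall by (simp add: pos_less_divide_eq)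
  qed
  then have "(a / (2 * \<Lambda>)) * (a * ((L * dmax\<^sup>2 + \<sigma>) * \<Lambda>)) < (a / (2 * \<Lambda>)) * (2 * \<pi>)"
    using apos Lambda by (intro mult_strict_left_mono) auto
  moreover have "(a / (2 * \<Lambda>)) * (a * ((L * dmax\<^sup>2 + \<sigma>) * \<Lambda>)) = L / 2 * (dmax * a)\<^sup>2 + \<sigma> / 2 * a\<^sup>2"
    using Lambda by (simp add: power2_eq_square divide_simps) (simp add: algebra_simps)
  moreover have "(a / (2 * \<Lambda>)) * (2 * \<pi>) = a * \<pi> / \<Lambda>" by simp
  ultimately have "- a * \<pi> / \<Lambda> + L / 2 * (dmax * a)\<^sup>2 < - \<sigma> / 2 * a\<^sup>2" by simp
  then have "f (y + d) < f y - \<sigma> / 2 * a\<^sup>2" using fb mu_le by simp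
  then show ?thesis unfolding succ_cond_def using dD DO[OF dD] by (auto simp: y_def a_def)
qed
end
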